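(* Let $\lambda = \lambda(d)$ be a function with $\lambda(d) \le d$ for all $d$ and $\lambda(d) \to \infty$ as $d \to \infty$. For every $\varepsilon > 0$ there exists $d_0$ such that the following holds for every $d \ge d_0$: if $G$ is a graph with $n$ vertices, average degree at most $d$, and at most $d^2 n / \lambda^3$ triangles (where $\lambda = \lambda(d)$), then $$\alpha(G) \ge (1 - \varepsilon) \frac{n \log \lambda}{d}.$$ (In the paper's asymptotic notation: $\alpha(G) \ge (1+o(1)) \frac{n \log \lambda}{d}$ as $d \to \infty$.)
   Context: $\alpha(G)$ denotes the independence number of $G$ (the size of a largest independent set), and $\log$ is the natural logarithm. *)

theory Defs
  imports Complex_Main
begin

text \<open>A finite simple graph on vertex set V (vertices are naturals, which is no
loss of generality for finite graphs) with symmetric irreflexive adjacency E,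
all edges lying inside V.\<close>
definition simple_graph :: "nat set \<Rightarrow> (nat \<Rightarrow> nat \<Rightarrow> bool) \<Rightarrow> bool" where
  "simple_graph V E \<longleftrightarrow> finite V \<and> (\<forall>u v. E u v \<longrightarrow> E v u)
     \<and> (\<forall>u. \<not> E u u) \<and> (\<forall>u v. E u v \<longrightarrow> u \<in> V \<and> v \<in> V)"

definition edge_set :: "nat set \<Rightarrow> (nat \<Rightarrow> nat \<Rightarrow> bool) \<Rightarrow> nat set set" where
  "edge_set V E = {{u, v} | u v. u \<in> V \<and> v \<in> V \<and> E u v}"

definition avg_degree :: "nat set \<Rightarrow> (nat \<Rightarrow> nat \<Rightarrow> bool) \<Rightarrow> real" where
  "avg_degree V E = 2 * real (card (edge_set V E)) / real (card V)"

definition triangles :: "nat set \<Rightarrow> (nat \<Rightarrow> nat \<Rightarrow> bool) \<Rightarrow> nat set set" where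
  "triangles V E = {T. T \<subseteq> V \<and> card T = 3 \<and> (\<forall>u\<in>T. \<forall>v\<in>T. u \<noteq> v \<longrightarrow> E u v)}"

definition independent_set :: "nat set \<Rightarrow> (nat \<Rightarrow> nat \<Rightarrow> bool) \<Rightarrow> nat set \<Rightarrow> bool" where
  "independent_set V E S \<longleftrightarrow> S \<subseteq> V \<and> (\<forall>u\<in>S. \<forall>v\<in>S. \<not> E u v)"

definition independence_number :: "nat set \<Rightarrow> (nat \<Rightarrow> nat \<Rightarrow> bool) \<Rightarrow> nat" where
  "independence_number V E = Max {card S | S. independent_set V E S}"

end

theory Submission imports Defs "HOL-Analysis.Analysis" begin



lemma psi_nonneg:
  fixes y :: real assumes "0 \<le> y"
  shows "0 \<le> 2 * ln (1 + y) - 2 * y / (1 + y) - y^2 / (1 + y)^2"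
proof -
  let ?g = "\<lambda>y::real. 2 * ln (1 + y) - 2 * y / (1 + y) - y^2 / (1 + y)^2"
  have "?g 0 \<le> ?g y"
  proof (rule deriv_nonneg_imp_mono[where g = "\<lambda>y::real. 2 * ln (1 + y) - 2 * y / (1 + y) - y^2 / (1 + y)^2" and g' = "\<lambda>y. 2 * y^2 / (1+y)^3" and a = 0 and b = y])
    fix x assume x: "x \<in> {0..y}"
    hence x0: "0 \<le> x" by auto
    have "(?g has_real_derivative 2 * (1 / (1 + x)) - 2 * ((1 * (1+x) - x * 1) / (1+x)^2)
            - ((2 * x) * (1+x)^2 - x^2 * (2 * (1+x))) / ((1+x)^2)^2) (at x)"
      using x0 by (intro derivative_eq_intros) (auto simp: power2_eq_square)
    moreover have "2 * (1 / (1 + x)) - 2 * ((1 * (1+x) - x * 1) / (1+x)^2)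
            - ((2 * x) * (1+x)^2 - x^2 * (2 * (1+x))) / ((1+x)^2)^2 = 2 * x^2 / (1+x)^3"
    proof -
      have p: "(1+x) \<noteq> 0" using x0 by simp
      show ?thesis using p by (simp add: divide_simps) (simp add: algebra_simps power2_eq_square power3_eq_cube power4_eq_xxxx)
    qed
    ultimately show "(?g has_real_derivative 2 * x^2 / (1+x)^3) (at x)" by simp
  next
    fix x :: real assume x: "x \<in> {0..y}"
    thus "0 \<le> 2 * x^2 / (1+x)^3" by simp
  qed (use assms in auto)
  thus ?thesis by simp
qed


definition GG :: "real \<Rightarrow> real \<Rightarrow> real" where "GG p z = ln (1 + p*z) / z"
definition G1 :: "real \<Rightarrow> real \<Rightarrow> real" where "G1 p z = p / ((1 + p*z) * z) - ln (1 + p*z) / z^2"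
definition G2 :: "real \<Rightarrow> real \<Rightarrow> real" where
  "G2 p z = (2 * ln (1 + p*z) - 2 * (p*z) / (1 + p*z) - (p*z)^2 / (1 + p*z)^2) / z^3"

lemma GG_deriv: assumes "0 < p" "0 < z" shows "(GG p has_real_derivative G1 p z) (at z)"
proof -
  have u: "0 < 1 + p*z" using assms by (simp add: add_pos_pos)
  show ?thesis
  unfolding GG_def[abs_def] G1_def
  apply (rule derivative_eq_intros refl | use assms u in \<open>(simp; fail)\<close>)+
  using assms u by (simp add: divide_simps) (simp add: algebra_simps power2_eq_square)
qed
lemma G1_deriv: assumes "0 < p" "0 < z" shows "(G1 p has_real_derivative G2 p z) (at z)"
proof -
  have u: "0 < 1 + p*z" using assms by (simp add: add_pos_pos)
  show ?thesis
  unfolding G2_def G1_def[abs_def]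
  apply (rule derivative_eq_intros refl | use assms u in \<open>(simp; fail)\<close>)+
  using assms u by (simp add: divide_simps) (simp add: algebra_simps power2_eq_square power3_eq_cube eval_nat_numeral)
qed


lemma S1: fixes L u z p :: real
  assumes "1 \<le> z" "0 < p" "1 \<le> u" "p*z \<le> L*u"
  shows "p / (u * z) - L / z^2 \<le> 0"
proof -
  have z: "0 < z" "0 < u" using assms by auto
  have "p / (u*z) = (p*z) / (u * z^2)" using z by (simp add: power2_eq_square)
  also have "\<dots> \<le> (L*u) / (u*z^2)" using assms z by (intro divide_right_mono) auto
  also have "\<dots> = L / z^2" using z by (simp add: power2_eq_square)
  finally show ?thesis by simp
qed

lemma S2: fixes L u z p :: real
  assumes "1 \<le> z" "0 < p" "u = 1 + p*z" "L \<le> p*z"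
  shows "L / z^2 - p / (u * z) \<le> p^2"
proof -
  have pz: "0 \<le> p*z" using assms by simp
  have u1: "1 \<le> u" using assms pz by simp
  have z: "0 < z" "0 < u" using assms(1) u1 by auto
  have "L / z^2 - p / (u * z) = (L*u - p*z) / (u*z^2)" using z by (simp add: field_simps power2_eq_square)
  also have "\<dots> \<le> (p*z*u - p*z) / (u*z^2)" using assms u1 z by (intro divide_right_mono) auto
  also have "p*z*u - p*z = p^2 * z^2" unfolding assms(3) by (simp add: algebra_simps power2_eq_square)
  also have "p^2 * z^2 / (u*z^2) = p^2 / u" using z by simp
  also have "p^2 / u \<le> p^2" using u1 by (simp add: divide_le_eq mult_le_cancel_left1)
  finally show ?thesis by simp
qed

lemma H1: fixes L u z p :: real
  assumes "1 \<le> z" "0 < p" "1 \<le> u" "L \<le> p*z" "0 \<le> L"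
  shows "L / z + (p / (u * z) - L / z^2) * (z - 1) \<ge> 0"
    and "L / z + (p / (u * z) - L / z^2) * (z - 1) \<le> 2 * p"
proof -
  have z: "0 < z" "0 < u" using assms by auto
  have e: "L / z + (p / (u * z) - L / z^2) * (z - 1) = p * ((z - 1) / z) / u + L / z^2"
    using z by (simp add: field_simps power2_eq_square)
  have a: "0 \<le> (z-1)/z" "(z-1)/z \<le> 1" using assms by auto
  have b: "p * ((z - 1) / z) / u \<le> p"
  proof -
    have "p * ((z - 1) / z) / u \<le> p * ((z - 1) / z)" using a assms z
      by (simp add: divide_le_eq mult_le_cancel_left1)
    also have "\<dots> \<le> p" using a assms by (intro mult_right_le_one_le) auto
    finally show ?thesis .
  qed
  have c: "L / z^2 \<le> p"
  proof -
    have "L / z^2 \<le> (p*z) / z^2" using assms by (intro divide_right_mono) auto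
    also have "\<dots> = p / z" using z by (simp add: power2_eq_square)
    also have "\<dots> \<le> p" using assms z by (simp add: divide_le_eq mult_le_cancel_left1)
    finally show ?thesis .
  qed
  show "L / z + (p / (u * z) - L / z^2) * (z - 1) \<ge> 0" unfolding e using a z assms by simp
  show "L / z + (p / (u * z) - L / z^2) * (z - 1) \<le> 2 * p" unfolding e using b c by simp
qed

lemma A0: fixes L u z p :: real
  assumes "1 \<le> z" "0 < p" "u = 1 + p*z" "L \<le> p*z" "0 \<le> L"
  shows "L - (p / (u * z) - L / z^2) * ((z - 1) * (2 - z)) \<le> 1 + 5 * p"
proof -
  have pz: "0 \<le> p*z" using assms by simp
  have u1: "1 \<le> u" using assms pz by simp
  have z: "0 < z" "0 < u" using assms(1) u1 by auto
  have e: "L - (p / (u * z) - L / z^2) * ((z - 1) * (2 - z)) =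
      3*L/z - 2*L/z^2 + p*z/u - 3*p/u + 2*p/(u*z)"
    using z by (simp add: field_simps power2_eq_square)
  have 1: "L/z \<le> p" using assms z by (simp add: divide_le_eq mult.commute)
  have 2: "0 \<le> L/z^2" using assms by simp
  have 3: "p*z/u \<le> 1" using assms z by simp
  have 4: "0 \<le> p/u" using assms z by simp
  have 5: "p/(u*z) \<le> p"
  proof -
    have "1 \<le> u*z" using u1 assms(1) mult_mono[of 1 u 1 z] by simp 
    thus ?thesis using assms z by (simp add: divide_le_eq)
  qed
  show ?thesis unfolding e using 1 2 3 4 5 by linarith
qed


definition deg :: "(nat \<Rightarrow> nat \<Rightarrow> bool) \<Rightarrow> nat set \<Rightarrow> nat \<Rightarrow> real" where
  "deg E A a = (\<Sum>b\<in>A. of_bool (E a b))"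
definition DD :: "(nat \<Rightarrow> nat \<Rightarrow> bool) \<Rightarrow> nat set \<Rightarrow> real" where
  "DD E A = (\<Sum>a\<in>A. deg E A a)"
definition TT :: "(nat \<Rightarrow> nat \<Rightarrow> bool) \<Rightarrow> nat set \<Rightarrow> real" where
  "TT E A = (\<Sum>a\<in>A. \<Sum>b\<in>A. \<Sum>c\<in>A. of_bool (E a b \<and> E b c \<and> E a c))"
definition Nn :: "(nat \<Rightarrow> nat \<Rightarrow> bool) \<Rightarrow> nat set \<Rightarrow> nat \<Rightarrow> nat set" where
  "Nn E A v = {u\<in>A. u \<noteq> v \<and> \<not> E v u}"

lemma sum_sub: "finite A \<Longrightarrow> B \<subseteq> A \<Longrightarrow> sum f B = (\<Sum>x\<in>A. if x \<in> B then f x else 0)"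
  by (metis Int_absorb1 sum.inter_restrict)

lemma DD_sub: assumes "finite A" "B \<subseteq> A"
  shows "DD E B = (\<Sum>a\<in>A. \<Sum>b\<in>A. of_bool (a \<in> B \<and> b \<in> B \<and> E a b))"
proof -
  have "DD E B = (\<Sum>a\<in>A. if a \<in> B then (\<Sum>b\<in>A. if b \<in> B then of_bool (E a b) else 0) else 0)"
    unfolding DD_def deg_def using assms
    by (subst sum_sub[OF assms]) (simp add: sum_sub[OF assms, symmetric])
  also have "\<dots> = (\<Sum>a\<in>A. \<Sum>b\<in>A. of_bool (a \<in> B \<and> b \<in> B \<and> E a b))"
    by (auto intro!: sum.cong simp del: sum_of_bool_eq)
  finally show ?thesis .
qed

lemma TT_sub: assumes "finite A" "B \<subseteq> A"
  shows "TT E B = (\<Sum>a\<in>A. \<Sum>b\<in>A. \<Sum>c\<in>A. of_bool (a \<in> B \<and> b \<in> B \<and> c \<in> B \<and> E a b \<and> E b c \<and> E a c))"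
proof -
  have "TT E B = (\<Sum>a\<in>A. if a \<in> B then (\<Sum>b\<in>A. if b \<in> B then (\<Sum>c\<in>A. if c \<in> B then of_bool (E a b \<and> E b c \<and> E a c) else 0) else 0) else 0)"
    unfolding TT_def
    by (subst sum_sub[OF assms]) (simp add: sum_sub[OF assms, symmetric] del: sum_of_bool_eq)
  also have "\<dots> = (\<Sum>a\<in>A. \<Sum>b\<in>A. \<Sum>c\<in>A. of_bool (a \<in> B \<and> b \<in> B \<and> c \<in> B \<and> E a b \<and> E b c \<and> E a c))"
    by (auto intro!: sum.cong simp del: sum_of_bool_eq)
  finally show ?thesis .
qed

lemma sum_swap3: "(\<Sum>w\<in>V. \<Sum>a\<in>A. \<Sum>b\<in>B. f w a b) = (\<Sum>a\<in>A. \<Sum>b\<in>B. \<Sum>w\<in>V. f w a b)"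
  by (simp add: sum.swap[of _ V])

lemma sum_swap4: "(\<Sum>w\<in>V. \<Sum>a\<in>A. \<Sum>b\<in>B. \<Sum>c\<in>C. f w a b c) = (\<Sum>a\<in>A. \<Sum>b\<in>B. \<Sum>c\<in>C. \<Sum>w\<in>V. f w a b c)"
  by (simp add: sum.swap[of _ V])

lemma deg_card: "finite A \<Longrightarrow> deg E A a = real (card {b\<in>A. E a b})"
proof -
  assume "finite A"
  moreover have "A \<inter> {b. E a b} = {b\<in>A. E a b}" by auto
  ultimately show ?thesis unfolding deg_def by simp
qed

lemma DD_alt: "DD E A = (\<Sum>a\<in>A. \<Sum>b\<in>A. of_bool (E a b))"
  unfolding DD_def deg_def ..

lemma count_avoid:
  assumes "finite V" "S \<subseteq> V"
  shows "(\<Sum>w\<in>V. of_bool (w \<notin> S) :: real) = real (card V) - real (card S)"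
proof -
  have "V \<inter> {w. w \<notin> S} = V - S" by auto
  hence "(\<Sum>w\<in>V. of_bool (w \<notin> S) :: real) = real (card (V - S))" using assms(1) by simp
  also have "\<dots> = real (card V) - real (card S)" using assms
    by (simp add: card_Diff_subset card_mono of_nat_diff finite_subset)
  finally show ?thesis .
qed

lemma L5:
  assumes fin: "finite V" and irr: "\<And>u. \<not> E u u"
  shows "(\<Sum>w\<in>V. DD E (V - {w})) = (real (card V) - 2) * DD E V"
proof -
  have "(\<Sum>w\<in>V. DD E (V - {w})) = (\<Sum>w\<in>V. \<Sum>a\<in>V. \<Sum>b\<in>V. of_bool (a \<in> V - {w} \<and> b \<in> V - {w} \<and> E a b))"
    using fin by (intro sum.cong refl DD_sub) auto
  also have "\<dots> = (\<Sum>a\<in>V. \<Sum>b\<in>V. \<Sum>w\<in>V. of_bool (a \<in> V - {w} \<and> b \<in> V - {w} \<and> E a b))"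
    by (rule sum_swap3)
  also have "\<dots> = (\<Sum>a\<in>V. \<Sum>b\<in>V. (real (card V) - 2) * of_bool (E a b))"
  proof (intro sum.cong refl)
    fix a b assume ab: "a \<in> V" "b \<in> V"
    show "(\<Sum>w\<in>V. of_bool (a \<in> V - {w} \<and> b \<in> V - {w} \<and> E a b)) = (real (card V) - 2) * of_bool (E a b)"
    proof (cases "E a b")
      case True
      hence "a \<noteq> b" using irr by auto
      have "(\<Sum>w\<in>V. of_bool (a \<in> V - {w} \<and> b \<in> V - {w} \<and> E a b) :: real) = (\<Sum>w\<in>V. of_bool (w \<notin> {a, b}))"
        using ab True by (intro sum.cong refl) (auto simp del: sum_of_bool_eq)
      also have "\<dots> = real (card V) - real (card {a, b})" using ab fin by (intro count_avoid) auto
      finally show ?thesis using True \<open>a \<noteq> b\<close> by simp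
    qed (simp del: sum_of_bool_eq)
  qed
  also have "\<dots> = (real (card V) - 2) * DD E V"
    unfolding DD_alt by (simp add: sum_distrib_left del: sum_of_bool_eq)
  finally show ?thesis .
qed

lemma L4:
  assumes fin: "finite V" and irr: "\<And>u. \<not> E u u"
  shows "(\<Sum>w\<in>V. TT E (V - {w})) = (real (card V) - 3) * TT E V"
proof -
  have "(\<Sum>w\<in>V. TT E (V - {w})) = (\<Sum>w\<in>V. \<Sum>a\<in>V. \<Sum>b\<in>V. \<Sum>c\<in>V.
      of_bool (a \<in> V - {w} \<and> b \<in> V - {w} \<and> c \<in> V - {w} \<and> E a b \<and> E b c \<and> E a c))"
    using fin by (intro sum.cong refl TT_sub) auto
  also have "\<dots> = (\<Sum>a\<in>V. \<Sum>b\<in>V. \<Sum>c\<in>V. \<Sum>w\<in>V.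
      of_bool (a \<in> V - {w} \<and> b \<in> V - {w} \<and> c \<in> V - {w} \<and> E a b \<and> E b c \<and> E a c))"
    by (rule sum_swap4)
  also have "\<dots> = (\<Sum>a\<in>V. \<Sum>b\<in>V. \<Sum>c\<in>V. (real (card V) - 3) * of_bool (E a b \<and> E b c \<and> E a c))"
  proof (intro sum.cong refl)
    fix a b c assume ab: "a \<in> V" "b \<in> V" "c \<in> V"
    show "(\<Sum>w\<in>V. of_bool (a \<in> V - {w} \<and> b \<in> V - {w} \<and> c \<in> V - {w} \<and> E a b \<and> E b c \<and> E a c))
       = (real (card V) - 3) * of_bool (E a b \<and> E b c \<and> E a c)"
    proof (cases "E a b \<and> E b c \<and> E a c")
      case True
      hence d: "a \<noteq> b" "b \<noteq> c" "a \<noteq> c" using irr by auto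
      have "(\<Sum>w\<in>V. of_bool (a \<in> V - {w} \<and> b \<in> V - {w} \<and> c \<in> V - {w} \<and> E a b \<and> E b c \<and> E a c) :: real) = (\<Sum>w\<in>V. of_bool (w \<notin> {a, b, c}))"
        using ab True by (intro sum.cong refl) (auto simp del: sum_of_bool_eq)
      also have "\<dots> = real (card V) - real (card {a, b, c})" using ab fin by (intro count_avoid) auto
      finally show ?thesis using True d by simp
    next
      case False
      have z: "\<And>w. (of_bool (a \<in> V - {w} \<and> b \<in> V - {w} \<and> c \<in> V - {w} \<and> E a b \<and> E b c \<and> E a c) :: real) = 0"
        using False by auto
      show ?thesis using False by (simp only: z sum.neutral_const) simp
    qed
  qed
  also have "\<dots> = (real (card V) - 3) * TT E V"
    unfolding TT_def by (simp add: sum_distrib_left del: sum_of_bool_eq)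
  finally show ?thesis .
qed

lemma L3:
  assumes fin: "finite V" "B \<subseteq> C" "C \<subseteq> V"
  shows "TT E B \<le> TT E C"
proof -
  have "TT E B = (\<Sum>a\<in>V. \<Sum>b\<in>V. \<Sum>c\<in>V. of_bool (a \<in> B \<and> b \<in> B \<and> c \<in> B \<and> E a b \<and> E b c \<and> E a c))"
    using assms by (intro TT_sub) auto
  also have "\<dots> \<le> (\<Sum>a\<in>V. \<Sum>b\<in>V. \<Sum>c\<in>V. of_bool (a \<in> C \<and> b \<in> C \<and> c \<in> C \<and> E a b \<and> E b c \<and> E a c))"
    using assms(2) by (intro sum_mono) (auto simp del: sum_of_bool_eq of_bool_conj)
  also have "\<dots> = TT E C" using assms by (intro TT_sub[symmetric]) auto
  finally show ?thesis .
qed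

lemma L1:
  assumes fin: "finite V" and irr: "\<And>u. \<not> E u u" and v: "v \<in> V"
  shows "real (card (Nn E V v)) = real (card V) - 1 - deg E V v"
proof -
  have e: "Nn E V v = V - insert v {b\<in>V. E v b}" unfolding Nn_def by auto
  have "card (insert v {b\<in>V. E v b}) = 1 + card {b\<in>V. E v b}" using fin irr by simp
  moreover have "insert v {b\<in>V. E v b} \<subseteq> V" using v by auto
  ultimately have "card (Nn E V v) = card V - (1 + card {b\<in>V. E v b})" unfolding e using fin
    by (simp add: card_Diff_subset finite_subset)
  moreover have "1 + card {b\<in>V. E v b} \<le> card V"
    using \<open>insert v {b\<in>V. E v b} \<subseteq> V\<close> \<open>card (insert v {b\<in>V. E v b}) = 1 + card {b\<in>V. E v b}\<close> fin
    by (metis card_mono)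
  ultimately show ?thesis using deg_card[OF fin, of E v] by (simp add: of_nat_diff)
qed

lemma L6:
  fixes f :: "'a \<Rightarrow> real"
  assumes "finite A" "A \<noteq> {}"
  shows "(sum f A)^2 / real (card A) \<le> (\<Sum>a\<in>A. (f a)^2)"
proof -
  let ?n = "real (card A)" let ?m = "sum f A / ?n"
  have n: "?n > 0" using assms by (simp add: card_gt_0_iff)
  have "0 \<le> (\<Sum>a\<in>A. (f a - ?m)^2)" by (simp add: sum_nonneg)
  also have "\<dots> = (\<Sum>a\<in>A. (f a)^2 - (2 * ?m) * f a + ?m^2)"
    by (intro sum.cong refl) (simp add: power2_diff)
  also have "\<dots> = (\<Sum>a\<in>A. (f a)^2) - (2 * ?m) * sum f A + ?n * ?m^2"
    by (simp add: sum.distrib sum_subtractf sum_distrib_left)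
  also have "\<dots> = (\<Sum>a\<in>A. (f a)^2) - (sum f A)^2 / ?n"
    using n by (simp add: field_simps power2_eq_square)
  finally show ?thesis by simp
qed

lemma L2:
  assumes fin: "finite V" and sym: "\<And>u v. E u v \<Longrightarrow> E v u" and irr: "\<And>u. \<not> E u u"
  shows "(\<Sum>v\<in>V. DD E (Nn E V v)) = real (card V) * DD E V - 2 * (\<Sum>a\<in>V. (deg E V a)^2) + TT E V"
proof -
  let ?n = "real (card V)"
  define cn where "cn a b = (\<Sum>c\<in>V. of_bool (E a c \<and> E b c) :: real)" for a b
  have "(\<Sum>v\<in>V. DD E (Nn E V v)) = (\<Sum>v\<in>V. \<Sum>a\<in>V. \<Sum>b\<in>V. of_bool (a \<in> Nn E V v \<and> b \<in> Nn E V v \<and> E a b))"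
    using fin by (intro sum.cong refl DD_sub) (auto simp: Nn_def)
  also have "\<dots> = (\<Sum>a\<in>V. \<Sum>b\<in>V. \<Sum>v\<in>V. of_bool (a \<in> Nn E V v \<and> b \<in> Nn E V v \<and> E a b))"
    by (rule sum_swap3)
  also have "\<dots> = (\<Sum>a\<in>V. \<Sum>b\<in>V. of_bool (E a b) * (?n - deg E V a - deg E V b + cn a b))"
  proof (intro sum.cong refl)
    fix a b assume ab: "a \<in> V" "b \<in> V"
    show "(\<Sum>v\<in>V. of_bool (a \<in> Nn E V v \<and> b \<in> Nn E V v \<and> E a b)) = of_bool (E a b) * (?n - deg E V a - deg E V b + cn a b)"
    proof (cases "E a b")
      case True
      hence d: "a \<noteq> b" using irr by auto
      define Na where "Na = insert a {c\<in>V. E a c}"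
      define Nb where "Nb = insert b {c\<in>V. E b c}"
      have sub: "Na \<subseteq> V" "Nb \<subseteq> V" using ab by (auto simp: Na_def Nb_def)
      have "(\<Sum>v\<in>V. of_bool (a \<in> Nn E V v \<and> b \<in> Nn E V v \<and> E a b) :: real) = (\<Sum>v\<in>V. of_bool (v \<notin> Na \<union> Nb))"
        using ab True sym by (intro sum.cong refl) (auto simp: Nn_def Na_def Nb_def simp del: sum_of_bool_eq)
      also have "\<dots> = ?n - real (card (Na \<union> Nb))" using fin sub by (intro count_avoid) auto
      finally have 1: "(\<Sum>v\<in>V. of_bool (a \<in> Nn E V v \<and> b \<in> Nn E V v \<and> E a b) :: real) = ?n - real (card (Na \<union> Nb))" .
      have fa: "finite Na" "finite Nb" using sub fin finite_subset by auto
      have 2: "real (card Na) + real (card Nb) = real (card (Na \<union> Nb)) + real (card (Na \<inter> Nb))"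
        using card_Un_Int[OF fa] by simp
      have 3: "real (card Na) = 1 + deg E V a" using irr fin by (simp add: Na_def deg_card)
      have 4: "real (card Nb) = 1 + deg E V b" using irr fin by (simp add: Nb_def deg_card)
      have "Na \<inter> Nb = insert a (insert b {c\<in>V. E a c \<and> E b c})"
        using ab True sym by (auto simp: Na_def Nb_def)
      hence 5: "real (card (Na \<inter> Nb)) = 2 + cn a b"
        using d irr fin by (simp add: cn_def Int_def Collect_conj_eq[symmetric])
      show ?thesis using 1 2 3 4 5 True by simp
    next
      case False
      have z: "\<And>v. (of_bool (a \<in> Nn E V v \<and> b \<in> Nn E V v \<and> E a b) :: real) = 0"
        using False by auto
      show ?thesis using False by (simp only: z sum.neutral_const) simp
    qed
  qed
  also have "\<dots> = (\<Sum>a\<in>V. \<Sum>b\<in>V. ?n * of_bool (E a b)) - (\<Sum>a\<in>V. \<Sum>b\<in>V. of_bool (E a b) * deg E V a)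
       - (\<Sum>a\<in>V. \<Sum>b\<in>V. of_bool (E a b) * deg E V b) + (\<Sum>a\<in>V. \<Sum>b\<in>V. of_bool (E a b) * cn a b)"
    by (simp add: algebra_simps sum.distrib sum_subtractf del: sum_of_bool_eq)
  also have "(\<Sum>a\<in>V. \<Sum>b\<in>V. ?n * of_bool (E a b)) = ?n * DD E V"
    unfolding DD_alt by (simp add: sum_distrib_left del: sum_of_bool_eq)
  also have "(\<Sum>a\<in>V. \<Sum>b\<in>V. of_bool (E a b) * deg E V a) = (\<Sum>a\<in>V. (deg E V a)^2)"
    by (intro sum.cong refl) (simp add: deg_def[of E V a for a] sum_distrib_right power2_eq_square del: sum_of_bool_eq)
  also have "(\<Sum>a\<in>V. \<Sum>b\<in>V. of_bool (E a b) * deg E V b) = (\<Sum>a\<in>V. (deg E V a)^2)"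
  proof -
    have "(\<Sum>a\<in>V. \<Sum>b\<in>V. of_bool (E a b) * deg E V b) = (\<Sum>b\<in>V. \<Sum>a\<in>V. of_bool (E b a) * deg E V b)"
    proof -
      have "(of_bool (E a b) :: real) = of_bool (E b a)" for a b
      proof -
        have "E a b = E b a" using sym by blast
        thus ?thesis by simp
      qed
      thus ?thesis by (subst sum.swap) simp
    qed
    also have "\<dots> = (\<Sum>b\<in>V. (deg E V b)^2)"
      by (intro sum.cong refl) (simp add: deg_def[of E V b for b] sum_distrib_right power2_eq_square del: sum_of_bool_eq)
    finally show ?thesis .
  qed
  also have "(\<Sum>a\<in>V. \<Sum>b\<in>V. of_bool (E a b) * cn a b) = TT E V"
    unfolding TT_def cn_def
    by (intro sum.cong refl) (simp add: sum_distrib_left conj_commute del: sum_of_bool_eq)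
  finally show ?thesis by simp
qed


lemma GG_convex: assumes "0 < p" shows "convex_on {0<..} (GG p)"
proof (rule f''_ge0_imp_convex[where f' = "G1 p" and f'' = "G2 p"])
  show "convex {0::real<..}" by simp
  fix z :: real assume z: "z \<in> {0<..}"
  show "(GG p has_real_derivative G1 p z) (at z)" using GG_deriv assms z by auto
  show "(G1 p has_real_derivative G2 p z) (at z)" using G1_deriv assms z by auto
  have "0 \<le> 2 * ln (1 + p*z) - 2 * (p*z) / (1 + p*z) - (p*z)^2 / (1 + p*z)^2"
    using psi_nonneg[of "p*z"] assms z by simp
  thus "0 \<le> G2 p z" unfolding G2_def using z by simp
qed

lemma GG_tangent: assumes "0 < p" "0 < z" "0 < w"
  shows "GG p z + G1 p z * (w - z) \<le> GG p w"
proof -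
  have "G1 p z * (w - z) \<le> GG p w - GG p z"
  proof (rule convex_on_imp_above_tangent[OF GG_convex[OF assms(1)]])
    show "connected {0::real<..}" by simp
    show "z \<in> interior {0<..}" using assms by (simp add: interior_open)
    show "w \<in> {0<..}" using assms by simp
    show "(GG p has_real_derivative G1 p z) (at z within {0<..})"
      using GG_deriv[OF assms(1,2)] by (rule has_field_derivative_at_within)
  qed
  thus ?thesis by simp
qed

definition hh :: "real \<Rightarrow> real \<Rightarrow> real \<Rightarrow> real" where "hh c p x = c * GG p (x + 1)"
definition ss :: "real \<Rightarrow> real \<Rightarrow> real \<Rightarrow> real" where "ss c p x = c * G1 p (x + 1)"

lemma hh_tangent: assumes "0 < p" "0 \<le> c" "0 \<le> x" "0 \<le> y"
  shows "hh c p x + ss c p x * (y - x) \<le> hh c p y"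
proof -
  have "GG p (x+1) + G1 p (x+1) * ((y+1) - (x+1)) \<le> GG p (y+1)"
    using assms by (intro GG_tangent) auto
  hence "c * (GG p (x+1) + G1 p (x+1) * ((y+1) - (x+1))) \<le> c * GG p (y+1)"
    using mult_left_mono assms(2) by blast
  thus ?thesis unfolding hh_def ss_def by (simp add: algebra_simps)
qed

lemma hh_facts: assumes p: "0 < p" and c: "0 \<le> c" and x: "0 \<le> x"
  shows "ss c p x \<le> 0" "- ss c p x \<le> c * p^2"
    "0 \<le> hh c p x + ss c p x * x" "hh c p x + ss c p x * x \<le> 2 * c * p"
    "1 - c - 5 * c * p \<le> 1 - (1 + x) * hh c p x + ss c p x * (x - x^2)"
proof -
  define z where "z = x + 1"
  define u where "u = 1 + p * z"
  define L where "L = ln u"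
  have z1: "1 \<le> z" using x by (simp add: z_def)
  have pz: "0 \<le> p * z" using p z1 by simp
  have u1: "1 \<le> u" using pz by (simp add: u_def)
  have L0: "0 \<le> L" using u1 by (simp add: L_def)
  have Lle: "L \<le> p * z" unfolding L_def u_def using pz by (rule ln_add_one_self_le_self)
  have Lge: "p * z \<le> L * u"
  proof -
    have "ln (1 / u) \<le> 1 / u - 1" using u1 by (intro ln_le_minus_one) simp
    hence "- L \<le> 1 / u - 1" using u1 by (simp add: L_def ln_div)
    hence "- L * u \<le> (1 / u - 1) * u" using u1 by (intro mult_right_mono) auto
    thus ?thesis using u1 by (simp add: algebra_simps u_def)
  qed
  have G1e: "G1 p (x+1) = p / (u * z) - L / z^2" unfolding G1_def z_def u_def L_def by simp
  have GGe: "GG p (x+1) = L / z" unfolding GG_def z_def u_def L_def by simp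
  have s1: "p / (u * z) - L / z^2 \<le> 0" using S1[OF z1 p u1 Lge] .
  show "ss c p x \<le> 0" unfolding ss_def G1e using s1 c by (simp add: mult_nonneg_nonpos)
  have s2: "L / z^2 - p / (u * z) \<le> p^2" using S2[OF z1 p u_def Lle] .
  show "- ss c p x \<le> c * p^2" unfolding ss_def G1e using mult_left_mono[OF s2 c] by (simp add: algebra_simps)
  have hx: "hh c p x + ss c p x * x = c * (L / z + (p / (u * z) - L / z^2) * (z - 1))"
    unfolding hh_def ss_def G1e GGe z_def by (simp add: algebra_simps)
  show "0 \<le> hh c p x + ss c p x * x" unfolding hx using H1(1)[OF z1 p u1 Lle L0] c by simp
  show "hh c p x + ss c p x * x \<le> 2 * c * p" unfolding hx using mult_left_mono[OF H1(2)[OF z1 p u1 Lle L0] c] by simp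
  have a0: "L - (p / (u * z) - L / z^2) * ((z - 1) * (2 - z)) \<le> 1 + 5 * p" using A0[OF z1 p u_def Lle L0] .
  have "(1 + x) * hh c p x = c * L" unfolding hh_def GGe z_def using z1 z_def by (simp add: field_simps)
  moreover have "ss c p x * (x - x^2) = c * ((p / (u * z) - L / z^2) * ((z - 1) * (2 - z)))"
    unfolding ss_def G1e z_def by (simp add: algebra_simps power2_eq_square)
  ultimately have "1 - (1 + x) * hh c p x + ss c p x * (x - x^2) = 1 - c * (L - (p / (u * z) - L / z^2) * ((z - 1) * (2 - z)))"
    by (simp add: algebra_simps)
  also have "\<dots> \<ge> 1 - c * (1 + 5 * p)" using mult_left_mono[OF a0 c] by simp
  finally show "1 - c - 5 * c * p \<le> 1 - (1 + x) * hh c p x + ss c p x * (x - x^2)" by (simp add: algebra_simps)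
qed



definition bnd :: "real \<Rightarrow> real \<Rightarrow> real \<Rightarrow> (nat \<Rightarrow> nat \<Rightarrow> bool) \<Rightarrow> nat set \<Rightarrow> real" where
  "bnd c p K E V = real (card V) * hh c p (DD E V / real (card V)) - K * TT E V"

lemma DD_nonneg: "0 \<le> DD E A" unfolding DD_def deg_def by (intro sum_nonneg) auto
lemma TT_nonneg: "0 \<le> TT E A" unfolding TT_def by (intro sum_nonneg) auto

lemma sum_lin: "(\<Sum>w\<in>V. A + s * f w - K * g w) = real (card V) * A + s * (\<Sum>w\<in>V. f w) - K * (\<Sum>w\<in>V. g w)"
  by (simp add: sum.distrib sum_subtractf sum_distrib_left)

lemma avg_exists:
  fixes f :: "'a \<Rightarrow> real"
  assumes "finite A" "A \<noteq> {}" "real (card A) * t \<le> (\<Sum>a\<in>A. f a)"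
  shows "\<exists>a\<in>A. t \<le> f a"
proof (rule ccontr)
  assume "\<not> ?thesis"
  hence "\<And>a. a \<in> A \<Longrightarrow> f a < t" by auto
  hence "(\<Sum>a\<in>A. f a) < (\<Sum>a\<in>A. t)" using assms by (intro sum_strict_mono) auto
  thus False using assms(3) by simp
qed

lemma tangent_mult:
  assumes p: "0 < p" and c: "0 \<le> c" and x: "0 \<le> x" and m: "0 \<le> m" and D: "0 \<le> D"
    and mD: "m = 0 \<Longrightarrow> D = 0"
  shows "m * hh c p x + ss c p x * (D - m * x) \<le> m * hh c p (D / m)"
proof (cases "m = 0")
  case True thus ?thesis using mD by simp
next
  case False
  hence m0: "0 < m" using m by simp
  have "hh c p x + ss c p x * (D / m - x) \<le> hh c p (D / m)"
    using p c x m0 D by (intro hh_tangent) auto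
  hence "m * (hh c p x + ss c p x * (D / m - x)) \<le> m * hh c p (D / m)"
    using m mult_left_mono by blast
  thus ?thesis using m0 by (simp add: algebra_simps)
qed

lemma main_ind:
  fixes E :: "nat \<Rightarrow> nat \<Rightarrow> bool"
  assumes sym: "\<And>u v. E u v \<Longrightarrow> E v u" and irr: "\<And>u. \<not> E u u"
    and p: "0 < p" and c: "0 \<le> c" and K: "0 < K"
    and key: "2 * c^2 * p^3 \<le> 3 * K * (1 - c - 5*c*p)"
  shows "finite V \<Longrightarrow> \<exists>S. independent_set V E S \<and> bnd c p K E V \<le> real (card S)"
proof (induction "card V" arbitrary: V rule: less_induct)
  case less
  note fin = less.prems
  show ?case
  proof (cases "V = {}")
    case True
    thus ?thesis by (intro exI[of _ "{}"]) (simp add: independent_set_def bnd_def TT_def)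
  next
    case False
    define n where "n = real (card V)"
    have n0: "0 < n" using False fin by (simp add: n_def card_gt_0_iff)
    define x where "x = DD E V / n"
    define h where "h = hh c p x"
    define s where "s = ss c p x"
    define \<tau> where "\<tau> = TT E V / n"
    have x0: "0 \<le> x" using n0 DD_nonneg by (simp add: x_def)
    have t0: "0 \<le> \<tau>" using n0 TT_nonneg by (simp add: \<tau>_def)
    have DDx: "DD E V = n * x" using n0 by (simp add: x_def)
    have TTt: "TT E V = n * \<tau>" using n0 by (simp add: \<tau>_def)
    have bndV: "bnd c p K E V = n * h - K * (n * \<tau>)"
      unfolding bnd_def h_def x_def n_def[symmetric] TTt ..
    note hf = hh_facts[OF p c x0, folded h_def s_def]
    show ?thesis
    proof (cases "h + s * x \<le> 3 * K * \<tau>")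
      case True
      have each: "(n - 1) * h + s * (DD E (V - {w}) - (n - 1) * x) - K * TT E (V - {w}) \<le> bnd c p K E (V - {w})"
        if w: "w \<in> V" for w
      proof -
        have "0 < card V" using w fin card_gt_0_iff by blast
        hence cw: "real (card (V - {w})) = n - 1" using w fin by (simp add: n_def of_nat_diff)
        have "(n - 1) * h + s * (DD E (V - {w}) - (n - 1) * x) \<le> (n - 1) * hh c p (DD E (V - {w}) / (n - 1))"
          unfolding h_def s_def
        proof (rule tangent_mult[OF p c x0])
          show "0 \<le> n - 1" using cw by (metis of_nat_0_le_iff)
          show "0 \<le> DD E (V - {w})" by (rule DD_nonneg)
          assume "n - 1 = 0"
          hence "V - {w} = {}" using cw fin by simp
          thus "DD E (V - {w}) = 0" by (simp only: DD_def sum.empty)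
        qed
        thus ?thesis unfolding bnd_def cw by simp
      qed
      have "(\<Sum>w\<in>V. (n - 1) * h + s * (DD E (V - {w}) - (n - 1) * x) - K * TT E (V - {w}))
          = (\<Sum>w\<in>V. ((n - 1) * h - s * (n - 1) * x) + s * DD E (V - {w}) - K * TT E (V - {w}))"
        by (simp add: algebra_simps)
      also have "\<dots> = n * ((n - 1) * h - s * (n - 1) * x) + s * ((n - 2) * DD E V) - K * ((n - 3) * TT E V)"
        unfolding sum_lin L5[OF fin irr] L4[OF fin irr] n_def ..
      also have "\<dots> = n * (n * h - K * (n * \<tau>)) + n * (3 * K * \<tau> - h - s * x)"
        unfolding DDx TTt by (simp add: algebra_simps)
      also have "\<dots> \<ge> n * (n * h - K * (n * \<tau>))" using True n0 by simp
      finally have "n * bnd c p K E V \<le> (\<Sum>w\<in>V. bnd c p K E (V - {w}))"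
        unfolding bndV using each sum_mono[of V] by (smt (verit))
      then obtain w where w: "w \<in> V" and bw: "bnd c p K E V \<le> bnd c p K E (V - {w})"
        using avg_exists[OF fin False] unfolding n_def by blast
      have "card (V - {w}) < card V" using w fin by (meson card_Diff1_less)
      then obtain S where S: "independent_set (V - {w}) E S" "bnd c p K E (V - {w}) \<le> real (card S)"
        using less.hyps[of "V - {w}"] fin by auto
      have "independent_set V E S" using S(1) by (auto simp: independent_set_def)
      thus ?thesis using S(2) bw by auto
    next
      case False
      hence small: "3 * K * \<tau> \<le> h + s * x" by simp
      define m where "m v = real (card (Nn E V v))" for v
      have NnV: "Nn E V v \<subseteq> V" for v by (auto simp: Nn_def)
      have each: "1 + (m v * h + s * (DD E (Nn E V v) - m v * x) - K * TT E (Nn E V v)) \<le> 1 + bnd c p K E (Nn E V v)"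
        if v: "v \<in> V" for v
      proof -
        have "m v * h + s * (DD E (Nn E V v) - m v * x) \<le> m v * hh c p (DD E (Nn E V v) / m v)"
          unfolding h_def s_def
        proof (rule tangent_mult[OF p c x0])
          show "0 \<le> m v" by (simp add: m_def)
          show "0 \<le> DD E (Nn E V v)" by (rule DD_nonneg)
          assume "m v = 0"
          hence "Nn E V v = {}" using fin NnV[of v] by (simp add: m_def finite_subset)
          thus "DD E (Nn E V v) = 0" by (simp only: DD_def sum.empty)
        qed
        thus ?thesis unfolding bnd_def m_def by simp
      qed
      have sl: "(\<Sum>v\<in>V. 1 + (m v * h + s * (DD E (Nn E V v) - m v * x) - K * TT E (Nn E V v)))
          = n + (h - s * x) * (\<Sum>v\<in>V. m v) + s * (\<Sum>v\<in>V. DD E (Nn E V v)) - K * (\<Sum>v\<in>V. TT E (Nn E V v))"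
      proof -
        have "(\<Sum>v\<in>V. 1 + (m v * h + s * (DD E (Nn E V v) - m v * x) - K * TT E (Nn E V v)))
           = (\<Sum>v\<in>V. 1 + (h - s * x) * m v + s * DD E (Nn E V v) - K * TT E (Nn E V v))"
          by (intro sum.cong refl) (simp add: algebra_simps)
        also have "\<dots> = n + (h - s * x) * (\<Sum>v\<in>V. m v) + s * (\<Sum>v\<in>V. DD E (Nn E V v)) - K * (\<Sum>v\<in>V. TT E (Nn E V v))"
          by (simp add: sum.distrib sum_subtractf sum_distrib_left n_def)
        finally show ?thesis .
      qed
      have sm: "(\<Sum>v\<in>V. m v) = n * n - n - DD E V"
      proof -
        have "(\<Sum>v\<in>V. m v) = (\<Sum>v\<in>V. n - 1 - deg E V v)"
          unfolding m_def n_def using L1[of V E, OF fin irr] by (intro sum.cong refl) auto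
        also have "\<dots> = n * n - n - DD E V" by (simp add: sum_subtractf sum.distrib DD_def n_def algebra_simps)
        finally show ?thesis .
      qed
      have sq: "DD E V ^ 2 / n \<le> (\<Sum>a\<in>V. (deg E V a)^2)"
        using L6[OF fin \<open>V \<noteq> {}\<close>, of "deg E V"] unfolding DD_def n_def .
      have sD: "s * (n * DD E V - 2 * (DD E V ^ 2 / n) + TT E V) \<le> s * (\<Sum>v\<in>V. DD E (Nn E V v))"
      proof -
        have "(\<Sum>v\<in>V. DD E (Nn E V v)) \<le> n * DD E V - 2 * (DD E V ^ 2 / n) + TT E V"
          using L2[of V E, OF fin sym irr] sq by (simp add: n_def)
        thus ?thesis using hf(1) by (intro mult_left_mono_neg) auto
      qed
      have sT: "(\<Sum>v\<in>V. TT E (Nn E V v)) \<le> (n - 3) * TT E V"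
      proof -
        have "(\<Sum>v\<in>V. TT E (Nn E V v)) \<le> (\<Sum>v\<in>V. TT E (V - {v}))"
          using fin by (intro sum_mono L3[of V]) (auto simp: Nn_def)
        also have "\<dots> = (n - 3) * TT E V" unfolding L4[OF fin irr] n_def ..
        finally show ?thesis .
      qed
      have Q: "0 \<le> 1 - (1 + x) * h + s * (x - x^2) + (s + 3 * K) * \<tau>"
      proof -
        have a: "s * (h + s * x) \<le> s * (3 * K * \<tau>)" using small hf(1) by (intro mult_left_mono_neg) auto
        have b: "- s * (h + s * x) \<le> (c * p^2) * (2 * c * p)"
          using hf(1-4) by (intro mult_mono) auto
        have "(c * p^2) * (2 * c * p) = 2 * c^2 * p^3" by (simp add: power2_eq_square power3_eq_cube)
        hence "- (s * \<tau>) * (3 * K) \<le> 3 * K * (1 - c - 5*c*p)" using a b key by (simp add: algebra_simps)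
        hence "(3 * K) * (- (s * \<tau>)) \<le> (3 * K) * (1 - c - 5*c*p)" by (simp add: algebra_simps)
        hence "- (s * \<tau>) \<le> 1 - c - 5*c*p" by (rule mult_left_le_imp_le) (use K in simp)
        moreover have "0 \<le> 3 * K * \<tau>" using K t0 by simp
        ultimately show ?thesis using hf(5) by (simp add: algebra_simps)
      qed
      have "n * bnd c p K E V \<le> (\<Sum>v\<in>V. 1 + bnd c p K E (Nn E V v))"
      proof -
        have "n * bnd c p K E V + n * (1 - (1 + x) * h + s * (x - x^2) + (s + 3 * K) * \<tau>)
            = n + (h - s * x) * (n * n - n - DD E V) + s * (n * DD E V - 2 * (DD E V ^ 2 / n) + TT E V) - K * ((n - 3) * TT E V)"
          unfolding bndV DDx TTt using n0 by (simp add: algebra_simps power2_eq_square)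
        also have "\<dots> \<le> n + (h - s * x) * (\<Sum>v\<in>V. m v) + s * (\<Sum>v\<in>V. DD E (Nn E V v)) - K * (\<Sum>v\<in>V. TT E (Nn E V v))"
        proof -
          have "K * (\<Sum>v\<in>V. TT E (Nn E V v)) \<le> K * ((n - 3) * TT E V)" using sT K by (intro mult_left_mono) auto
          thus ?thesis unfolding sm using sD by linarith
        qed
        also have "\<dots> = (\<Sum>v\<in>V. 1 + (m v * h + s * (DD E (Nn E V v) - m v * x) - K * TT E (Nn E V v)))"
          using sl by simp
        also have "\<dots> \<le> (\<Sum>v\<in>V. 1 + bnd c p K E (Nn E V v))" using each by (intro sum_mono) auto
        finally have X: "n * bnd c p K E V + n * (1 - (1 + x) * h + s * (x - x^2) + (s + 3 * K) * \<tau>) \<le> (\<Sum>v\<in>V. 1 + bnd c p K E (Nn E V v))" .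
        have "0 \<le> n * (1 - (1 + x) * h + s * (x - x^2) + (s + 3 * K) * \<tau>)" using Q n0 by simp
        with X show ?thesis by linarith
      qed
      then obtain v where v: "v \<in> V" and bv: "bnd c p K E V \<le> 1 + bnd c p K E (Nn E V v)"
        using avg_exists[OF fin \<open>V \<noteq> {}\<close>] unfolding n_def by blast
      have "Nn E V v \<subset> V" using v NnV[of v] by (auto simp: Nn_def)
      hence "card (Nn E V v) < card V" using fin by (rule psubset_card_mono[rotated])
      then obtain S where S: "independent_set (Nn E V v) E S" "bnd c p K E (Nn E V v) \<le> real (card S)"
        using less.hyps[of "Nn E V v"] fin NnV[of v] finite_subset by blast
      have SN: "S \<subseteq> Nn E V v" using S(1) by (simp add: independent_set_def)
      have finS: "finite S" using finite_subset[OF SN finite_subset[OF NnV[of v] fin]] .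
      have vS: "v \<notin> S" using SN by (auto simp: Nn_def)
      have "independent_set V E (insert v S)"
        unfolding independent_set_def
      proof (intro conjI ballI)
        show "insert v S \<subseteq> V" using SN NnV[of v] v by auto
        fix a b assume a: "a \<in> insert v S" and b: "b \<in> insert v S"
        have nb: "\<And>u. u \<in> S \<Longrightarrow> \<not> E v u \<and> \<not> E u v" using SN sym by (auto simp: Nn_def)
        have SS: "\<And>u w. u \<in> S \<Longrightarrow> w \<in> S \<Longrightarrow> \<not> E u w" using S(1) by (simp add: independent_set_def)
        show "\<not> E a b"
        proof (cases "a = v")
          case True
          thus ?thesis using b nb irr by auto
        next
          case False
          hence aS: "a \<in> S" using a by simp
          thus ?thesis using b nb SS by auto
        qed
      qed
      moreover have "real (card (insert v S)) = 1 + real (card S)" using finS vS by simp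
      ultimately show ?thesis using S(2) bv by auto
    qed
  qed
qed

lemma edge_set_fin: "finite V \<Longrightarrow> finite (edge_set V E)"
proof -
  assume "finite V"
  moreover have "edge_set V E \<subseteq> Pow V" by (auto simp: edge_set_def)
  ultimately show ?thesis by (meson finite_Pow_iff finite_subset)
qed

lemma tri_fin: "finite V \<Longrightarrow> finite (triangles V E)"
proof -
  assume "finite V"
  moreover have "triangles V E \<subseteq> Pow V" by (auto simp: triangles_def)
  ultimately show ?thesis by (meson finite_Pow_iff finite_subset)
qed

lemma DD_le_edges:
  assumes G: "simple_graph V E"
  shows "DD E V \<le> 2 * real (card (edge_set V E))"
proof -
  have fin: "finite V" using G by (simp add: simple_graph_def)
  have irr: "\<And>u. \<not> E u u" using G by (simp add: simple_graph_def)
  let ?ES = "edge_set V E"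
  have fES: "finite ?ES" using edge_set_fin[OF fin] .
  have "DD E V = (\<Sum>a\<in>V. \<Sum>b\<in>V. of_bool (E a b))" by (rule DD_alt)
  also have "\<dots> \<le> (\<Sum>a\<in>V. \<Sum>b\<in>V. \<Sum>e\<in>?ES. of_bool (a \<in> e \<and> b \<in> e \<and> a \<noteq> b))"
  proof (intro sum_mono)
    fix a b assume ab: "a \<in> V" "b \<in> V"
    show "(of_bool (E a b) :: real) \<le> (\<Sum>e\<in>?ES. of_bool (a \<in> e \<and> b \<in> e \<and> a \<noteq> b))"
    proof (cases "E a b")
      case True
      hence "{a, b} \<in> ?ES" using ab by (auto simp: edge_set_def)
      hence "(of_bool (a \<in> {a,b} \<and> b \<in> {a,b} \<and> a \<noteq> b) :: real) \<le> (\<Sum>e\<in>?ES. of_bool (a \<in> e \<and> b \<in> e \<and> a \<noteq> b))"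
        using fES by (intro member_le_sum) auto
      moreover have "a \<noteq> b" using True irr by auto
      ultimately show ?thesis using True by (simp del: sum_of_bool_eq)
    qed (simp add: sum_nonneg del: sum_of_bool_eq)
  qed
  also have "\<dots> = (\<Sum>e\<in>?ES. \<Sum>a\<in>V. \<Sum>b\<in>V. of_bool (a \<in> e \<and> b \<in> e \<and> a \<noteq> b))"
    by (rule sum_swap3[symmetric])
  also have "\<dots> = (\<Sum>e\<in>?ES. 2)"
  proof (intro sum.cong refl)
    fix e assume "e \<in> ?ES"
    then obtain u v where e: "e = {u, v}" "u \<in> V" "v \<in> V" "E u v" by (auto simp: edge_set_def)
    have uv: "u \<noteq> v" using e irr by auto
    have "(\<Sum>a\<in>V. \<Sum>b\<in>V. of_bool (a \<in> e \<and> b \<in> e \<and> a \<noteq> b) :: real) = (\<Sum>a\<in>V. of_bool (a = u) + of_bool (a = v))"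
    proof (intro sum.cong refl)
      fix a assume a: "a \<in> V"
      have "V \<inter> {b. a \<in> e \<and> b \<in> e \<and> a \<noteq> b} = (if a = u then {v} else if a = v then {u} else {})"
        using e uv by auto
      thus "(\<Sum>b\<in>V. of_bool (a \<in> e \<and> b \<in> e \<and> a \<noteq> b) :: real) = of_bool (a = u) + of_bool (a = v)"
        using fin uv by simp
    qed
    also have "\<dots> = 2" using e fin by (simp add: sum.distrib)
    finally show "(\<Sum>a\<in>V. \<Sum>b\<in>V. of_bool (a \<in> e \<and> b \<in> e \<and> a \<noteq> b) :: real) = 2" .
  qed
  also have "\<dots> = 2 * real (card ?ES)" by simp
  finally show ?thesis .
qed

lemma TT_le_tri:
  assumes G: "simple_graph V E"
  shows "TT E V \<le> 27 * real (card (triangles V E))"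
proof -
  have fin: "finite V" using G by (simp add: simple_graph_def)
  have irr: "\<And>u. \<not> E u u" using G by (simp add: simple_graph_def)
  have sym: "\<And>u v. E u v \<Longrightarrow> E v u" using G by (simp add: simple_graph_def)
  let ?T = "triangles V E"
  have fT: "finite ?T" using tri_fin[OF fin] .
  have "TT E V \<le> (\<Sum>a\<in>V. \<Sum>b\<in>V. \<Sum>c\<in>V. \<Sum>t\<in>?T. of_bool (a \<in> t \<and> b \<in> t \<and> c \<in> t))"
    unfolding TT_def
  proof (intro sum_mono)
    fix a b c assume abc: "a \<in> V" "b \<in> V" "c \<in> V"
    show "(of_bool (E a b \<and> E b c \<and> E a c) :: real) \<le> (\<Sum>t\<in>?T. of_bool (a \<in> t \<and> b \<in> t \<and> c \<in> t))"
    proof (cases "E a b \<and> E b c \<and> E a c")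
      case True
      hence d: "a \<noteq> b" "b \<noteq> c" "a \<noteq> c" using irr by auto
      have "{a, b, c} \<in> ?T" unfolding triangles_def using abc True d sym by auto
      hence "(of_bool (a \<in> {a,b,c} \<and> b \<in> {a,b,c} \<and> c \<in> {a,b,c}) :: real) \<le> (\<Sum>t\<in>?T. of_bool (a \<in> t \<and> b \<in> t \<and> c \<in> t))"
        using fT by (intro member_le_sum) auto
      thus ?thesis using True by (simp del: sum_of_bool_eq)
    next
      case False
      have "(of_bool (E a b \<and> E b c \<and> E a c) :: real) = 0" using False by simp
      moreover have "0 \<le> (\<Sum>t\<in>?T. (of_bool (a \<in> t \<and> b \<in> t \<and> c \<in> t) :: real))"
        by (intro sum_nonneg) simp
      ultimately show ?thesis by linarith
    qed
  qed
  also have "\<dots> = (\<Sum>t\<in>?T. \<Sum>a\<in>V. \<Sum>b\<in>V. \<Sum>c\<in>V. of_bool (a \<in> t \<and> b \<in> t \<and> c \<in> t))"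
    by (rule sum_swap4[symmetric])
  also have "\<dots> = (\<Sum>t\<in>?T. 27)"
  proof (intro sum.cong refl)
    fix t assume t: "t \<in> ?T"
    have tV: "V \<inter> t = t" "card t = 3" using t by (auto simp: triangles_def)
    have S3: "(\<Sum>a\<in>V. of_bool (a \<in> t)) = (3::real)"
    proof -
      have "V \<inter> {a. a \<in> t} = t" using tV by auto
      thus ?thesis using fin tV by simp
    qed
    have S3P: "(\<Sum>c\<in>V. of_bool (P \<and> c \<in> t)) = (3::real) * of_bool P" for P
      using S3 by (cases P) (simp_all del: sum_of_bool_eq)
    have "(\<Sum>a\<in>V. \<Sum>b\<in>V. \<Sum>c\<in>V. of_bool (a \<in> t \<and> b \<in> t \<and> c \<in> t) :: real)
        = (\<Sum>a\<in>V. \<Sum>b\<in>V. 3 * of_bool (a \<in> t \<and> b \<in> t))"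
      using S3P[of "_ \<and> _"] by (simp only: conj_assoc[symmetric])
    also have "\<dots> = (\<Sum>a\<in>V. 3 * (3 * of_bool (a \<in> t)))"
      using S3P by (simp add: sum_distrib_left[symmetric] del: sum_of_bool_eq)
    also have "\<dots> = 27" using S3 by (simp add: sum_distrib_left[symmetric] del: sum_of_bool_eq)
    finally show "(\<Sum>a\<in>V. \<Sum>b\<in>V. \<Sum>c\<in>V. of_bool (a \<in> t \<and> b \<in> t \<and> c \<in> t) :: real) = 27" by simp
  qed
  also have "\<dots> = 27 * real (card ?T)" by simp
  finally show ?thesis .
qed

lemma indep_le:
  assumes "finite V" "independent_set V E S"
  shows "card S \<le> independence_number V E"
proof -
  have "{card S |S. independent_set V E S} \<subseteq> {0..card V}"
    using assms(1) by (auto simp: independent_set_def intro: card_mono)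
  hence "finite {card S |S. independent_set V E S}" by (rule finite_subset) simp
  thus ?thesis unfolding independence_number_def using assms(2) by (intro Max_ge) auto
qed

lemma final_arith:
  fixes \<delta> \<epsilon> A C1 :: real
  assumes \<delta>: "0 < \<delta>" "\<delta> \<le> 1/8" "4*\<delta> \<le> \<epsilon>"
    and A: "(C1 + 1) / (2*\<delta>) \<le> A" and C1: "0 < C1"
  shows "(1 - \<epsilon>) * A \<le> (1-\<delta>) * (1-\<delta>) * (A - C1) - 1"
proof -
  have f1: "C1 + 1 \<le> 2*\<delta>*A" using A \<delta> by (simp add: divide_le_eq mult.commute)
  have A0: "0 \<le> A" using f1 C1 \<delta> by (smt (verit) mult_pos_neg)
  have f2: "2*\<delta>*A \<le> 1 * A" using A0 \<delta> by (intro mult_right_mono) auto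
  have AC: "0 \<le> A - C1" using f1 f2 by linarith
  have f3: "(1 - 2*\<delta>) * (A - C1) \<le> (1-\<delta>)*(1-\<delta>) * (A - C1)"
    using AC by (intro mult_right_mono) (auto simp: algebra_simps)
  have f4: "4*\<delta>*A \<le> \<epsilon> * A" using A0 \<delta> by (intro mult_right_mono) auto
  have e1: "(1 - 2*\<delta>) * (A - C1) = A - C1 - 2*\<delta>*A + 2*\<delta>*C1" by (simp add: algebra_simps)
  have e2: "0 \<le> 2*\<delta>*C1" using \<delta> C1 by simp
  have e3: "(1 - \<epsilon>) * A = A - \<epsilon> * A" by (simp add: algebra_simps)
  have e4: "4*\<delta>*A = 2 * (2*\<delta>*A)" by simp
  show ?thesis using f1 f3 f4 e1 e2 e3 e4 by linarith
qed

theorem lemma5p2: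
  fixes lam :: "real \<Rightarrow> real"
  assumes "\<And>d. lam d \<le> d"
    and "filterlim lam at_top at_top"
  shows "\<forall>\<epsilon>>0. \<exists>d0. \<forall>d\<ge>d0. \<forall>V E.
           simple_graph V E \<and> avg_degree V E \<le> d
           \<and> real (card (triangles V E)) \<le> d^2 * real (card V) / (lam d)^3
           \<longrightarrow> real (independence_number V E) \<ge> (1 - \<epsilon>) * real (card V) * ln (lam d) / d"
proof (intro allI impI)
  fix \<epsilon> :: real assume \<epsilon>: "\<epsilon> > 0"
  define \<delta> where "\<delta> = min \<epsilon> (1/2) / 4"
  have \<delta>: "0 < \<delta>" "\<delta> \<le> 1/8" "4*\<delta> \<le> \<epsilon>" using \<epsilon> by (auto simp: \<delta>_def)
  define c where "c = 1 - \<delta>"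
  define \<kappa> where "\<kappa> = 2 / \<delta>"
  define C1 where "C1 = ln (10 / \<delta>)"
  have C1: "0 < C1" unfolding C1_def using \<delta> by (intro ln_gt_zero) (simp add: field_simps)
  define \<Lambda> where "\<Lambda> = exp ((C1 + 1) / (2*\<delta>))"
  have "eventually (\<lambda>x. \<Lambda> \<le> lam x) at_top" using assms(2) by (simp add: filterlim_at_top)
  then obtain N where N: "\<And>d. d \<ge> N \<Longrightarrow> \<Lambda> \<le> lam d" by (auto simp: eventually_at_top_linorder)
  show "\<exists>d0. \<forall>d\<ge>d0. \<forall>V E. simple_graph V E \<and> avg_degree V E \<le> d
           \<and> real (card (triangles V E)) \<le> d^2 * real (card V) / (lam d)^3
           \<longrightarrow> real (independence_number V E) \<ge> (1 - \<epsilon>) * real (card V) * ln (lam d) / d"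
  proof (intro exI[of _ "max N (1/\<delta>)"] allI impI)
    fix d :: real and V :: "nat set" and E :: "nat \<Rightarrow> nat \<Rightarrow> bool"
    assume d: "max N (1/\<delta>) \<le> d"
    assume H: "simple_graph V E \<and> avg_degree V E \<le> d
           \<and> real (card (triangles V E)) \<le> d^2 * real (card V) / (lam d)^3"
    have G: "simple_graph V E" and avg: "avg_degree V E \<le> d"
      and tri: "real (card (triangles V E)) \<le> d^2 * real (card V) / (lam d)^3" using H by auto
    have fin: "finite V" and sym: "\<And>u v. E u v \<Longrightarrow> E v u" and irr: "\<And>u. \<not> E u u"
      using G by (auto simp: simple_graph_def)
    define l where "l = lam d"
    have dd: "1/\<delta> \<le> d" using d by simp
    have "0 < 1/\<delta>" using \<delta> by simp
    hence d0: "0 < d" using dd by linarith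
    have lL: "\<Lambda> \<le> l" using N d by (simp add: l_def)
    have "0 < \<Lambda>" by (simp add: \<Lambda>_def)
    hence l0: "0 < l" using lL by linarith
    have ld: "l \<le> d" using assms(1) by (simp add: l_def)
    have "ln \<Lambda> \<le> ln l" using lL l0 \<open>0 < \<Lambda>\<close> by simp
    hence lnl: "(C1 + 1) / (2*\<delta>) \<le> ln l" by (simp add: \<Lambda>_def)
    have C1le: "C1 + 1 \<le> (C1 + 1) / (2*\<delta>)" using \<delta> C1 by (simp add: le_divide_eq)
    have lnl0: "0 \<le> ln l" using lnl C1le C1 by linarith
    have AC: "0 \<le> ln l - C1" using lnl C1le by linarith
    have ind0: "0 \<le> real (independence_number V E)" by simp
    show "(1 - \<epsilon>) * real (card V) * ln (lam d) / d \<le> real (independence_number V E)"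
    proof (cases "card V = 0")
      case True
      thus ?thesis using ind0 by simp
    next
      case False
      define n where "n = real (card V)"
      have n0: "0 < n" using False by (simp add: n_def)
      define p where "p = \<delta> * l / (10 * d)"
      define K where "K = \<kappa> * p^3"
      have p0: "0 < p" using \<delta> l0 d0 by (simp add: p_def)
      have pd: "p \<le> \<delta> / 10"
      proof -
        have "\<delta> * l \<le> \<delta> * d" using ld \<delta> by simp
        thus ?thesis using d0 by (simp add: p_def divide_le_eq field_simps)
      qed
      have c0: "0 \<le> c" "c \<le> 1" using \<delta> by (auto simp: c_def)
      have K0: "0 < K" using p0 \<delta> by (simp add: K_def \<kappa>_def)
      have key: "2 * c^2 * p^3 \<le> 3 * K * (1 - c - 5*c*p)"
      proof -
        have "5*c*p \<le> 5 * 1 * (\<delta>/10)" using c0 pd p0 by (intro mult_mono) auto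
        hence a: "\<delta>/2 \<le> 1 - c - 5*c*p" by (simp add: c_def)
        have "3 * K * (\<delta>/2) = 3 * p^3" using \<delta> by (simp add: K_def \<kappa>_def)
        moreover have "3 * K * (\<delta>/2) \<le> 3 * K * (1 - c - 5*c*p)" using a K0 by (intro mult_left_mono) auto
        ultimately have b: "3 * p^3 \<le> 3 * K * (1 - c - 5*c*p)" by linarith
        have c2: "c^2 \<le> 1" using c0 by (simp add: power_le_one)
        have p3: "0 \<le> p^3" using p0 by simp
        have f: "2 * c^2 * p^3 \<le> 2 * 1 * p^3" using c2 p3 by (intro mult_right_mono) auto
        show ?thesis using f b p3 by linarith
      qed
      obtain S where S: "independent_set V E S" "bnd c p K E V \<le> real (card S)"
        using main_ind[of E p c K V, OF sym irr p0 c0(1) K0 key fin] by blast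
      have alpha: "real (card S) \<le> real (independence_number V E)"
        using indep_le[OF fin S(1)] by simp
      have DDd: "DD E V / n \<le> d"
      proof -
        have "DD E V / n \<le> 2 * real (card (edge_set V E)) / n"
          using DD_le_edges[OF G] n0 by (simp add: divide_right_mono)
        also have "\<dots> = avg_degree V E" by (simp add: avg_degree_def n_def)
        finally show ?thesis using avg by simp
      qed
      have hhd: "hh c p d \<le> hh c p (DD E V / n)"
      proof -
        have "hh c p d + ss c p d * (DD E V / n - d) \<le> hh c p (DD E V / n)"
          using p0 c0 d0 DD_nonneg n0 by (intro hh_tangent) auto
        moreover have "0 \<le> ss c p d * (DD E V / n - d)"
          using hh_facts(1)[OF p0 c0(1), of d] d0 DDd by (intro mult_nonpos_nonpos) auto
        ultimately show ?thesis by simp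
      qed
      have TTb: "K * TT E V \<le> n / d"
      proof -
        have "TT E V \<le> 27 * (d^2 * n / l^3)"
          using TT_le_tri[OF G] tri by (simp add: n_def l_def)
        hence "K * TT E V \<le> K * (27 * (d^2 * n / l^3))" using K0 by (intro mult_left_mono) auto
        also have "\<dots> = 54 * \<delta>^2 / 1000 * (n / d)"
          using d0 l0 \<delta> by (simp add: K_def \<kappa>_def p_def field_simps power2_eq_square power3_eq_cube)
        also have "\<dots> \<le> 1 * (n / d)"
        proof (rule mult_right_mono)
          have "\<delta>^2 \<le> 1" using \<delta> by (simp add: power_le_one)
          thus "54 * \<delta>^2 / 1000 \<le> 1" by simp
          show "0 \<le> n / d" using n0 d0 by simp
        qed
        finally show ?thesis by simp
      qed
      have lnb: "ln l - C1 \<le> ln (1 + p * (d + 1))"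
      proof -
        have pdv: "p * d = \<delta> * l / 10" using d0 by (simp add: p_def)
        have "ln (p * d) = ln \<delta> + ln l - ln 10" unfolding pdv using \<delta> l0 by (simp add: ln_div ln_mult)
        moreover have "C1 = ln 10 - ln \<delta>" unfolding C1_def using \<delta> by (simp add: ln_div)
        moreover have "ln (p * d) \<le> ln (1 + p * (d + 1))"
        proof (rule ln_mono)
          show "0 < p * d" using p0 d0 by simp
          show "p * d \<le> 1 + p * (d + 1)" using p0 by (simp add: algebra_simps)
        qed
        ultimately show ?thesis by linarith
      qed
      have hhl: "(1 - \<delta>) * (1 - \<delta>) * (ln l - C1) / d \<le> hh c p d"
      proof -
        have dd1: "1 \<le> \<delta> * d" using dd \<delta> by (simp add: divide_le_eq mult.commute)
        have e: "(1 - \<delta>) * (d + 1) = d + 1 - \<delta> * d - \<delta>" by (simp add: algebra_simps)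
        have "(1 - \<delta>) * (d + 1) \<le> d" using e dd1 \<delta> by linarith
        hence "(1 - \<delta>) * (d + 1) / (d * (d + 1)) \<le> d / (d * (d + 1))" using d0 by (intro divide_right_mono) auto
        moreover have "(1 - \<delta>) * (d + 1) / (d * (d + 1)) = (1 - \<delta>) / d" using d0 by simp
        moreover have "d / (d * (d + 1)) = 1 / (d + 1)" using d0 by simp
        ultimately have q: "(1 - \<delta>) / d \<le> 1 / (d + 1)" by simp
        have X0: "0 \<le> (1 - \<delta>) * (ln l - C1)" using AC \<delta> by simp
        have "(1 - \<delta>) * (1 - \<delta>) * (ln l - C1) / d = ((1 - \<delta>) * (ln l - C1)) * ((1 - \<delta>) / d)" by simp
        also have "\<dots> \<le> ((1 - \<delta>) * (ln l - C1)) * (1 / (d + 1))" using q X0 by (intro mult_left_mono) auto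
        also have "\<dots> \<le> ((1 - \<delta>) * ln (1 + p * (d + 1))) * (1 / (d+1))"
          using lnb \<delta> d0 by (intro mult_right_mono mult_left_mono) auto
        also have "\<dots> = hh c p d" by (simp add: hh_def GG_def c_def)
        finally show ?thesis .
      qed
      have "(1 - \<epsilon>) * n * ln l / d \<le> n * ((1 - \<delta>) * (1 - \<delta>) * (ln l - C1) - 1) / d"
      proof -
        have "(1 - \<epsilon>) * ln l \<le> (1 - \<delta>) * (1 - \<delta>) * (ln l - C1) - 1" by (rule final_arith[OF \<delta> lnl C1])
        hence "n * ((1 - \<epsilon>) * ln l) \<le> n * ((1 - \<delta>) * (1 - \<delta>) * (ln l - C1) - 1)" using n0 by simp
        thus ?thesis using d0 by (simp add: divide_right_mono mult.assoc mult.left_commute)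
      qed
      also have "\<dots> = n * ((1 - \<delta>) * (1 - \<delta>) * (ln l - C1) / d) - n / d" using d0 by (simp add: field_simps)
      also have "\<dots> \<le> n * hh c p d - K * TT E V"
      proof -
        have "n * ((1 - \<delta>) * (1 - \<delta>) * (ln l - C1) / d) \<le> n * hh c p d" using hhl n0 by (intro mult_left_mono) auto
        thus ?thesis using TTb by linarith
      qed
      also have "\<dots> \<le> n * hh c p (DD E V / n) - K * TT E V" using hhd n0 by simp
      also have "\<dots> = bnd c p K E V" by (simp add: bnd_def n_def)
      finally show ?thesis using S(2) alpha by (simp add: l_def n_def)
    qed
  qed
qed

end
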